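(* Let $u\in(\mathbb{N}\cup\{0\})^m$ and put $M:=\{x\in\mathbb{R}^m:0\leq x\leq u\}$ (entrywise order) with the metric induced by $\|\cdot\|_\infty$. Then $M\cap\mathbb{Z}^m$ is the unique optimal code in $(M,\|\cdot\|_\infty)$ of size $\prod_{i=1}^m(u_i+1)$.
   Context: For a finite $C\subseteq M$, $\delta(C):=\min\{\|x-y\|_\infty:x,y\in C,x\neq y\}$. An optimal code of size $n$ is an $n$-element subset $C\subseteq M$ maximizing $\delta(C)$ among all $n$-element subsets of $M$. *)

theory Defs
  imports "HOL-Analysis.Analysis"
begin

text \<open>Sup-norm on real^'m (the library norm on real^'m is Euclidean).\<close>
definition linf_norm :: "real ^ 'm \<Rightarrow> real" where
  "linf_norm x = Max (range (\<lambda>i. \<bar>x $ i\<bar>))"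

definition delta :: "(real ^ 'm) set \<Rightarrow> real" where
  "delta C = Min {linf_norm (x - y) | x y. x \<in> C \<and> y \<in> C \<and> x \<noteq> y}"

definition optimal_code :: "(real ^ 'm) set \<Rightarrow> nat \<Rightarrow> (real ^ 'm) set \<Rightarrow> bool" where
  "optimal_code M n C \<longleftrightarrow> C \<subseteq> M \<and> finite C \<and> card C = n \<and>
     (\<forall>D. D \<subseteq> M \<and> finite D \<and> card D = n \<longrightarrow> delta D \<le> delta C)"

definition nn_box :: "nat ^ 'm \<Rightarrow> (real ^ 'm) set" where
  "nn_box u = {x. \<forall>i. 0 \<le> x $ i \<and> x $ i \<le> real (u $ i)}"

end

theory Submission
  imports Defs
begin

lemma floor_close: assumes "\<lfloor>a\<rfloor> = \<lfloor>b::real\<rfloor>" shows "\<bar>a - b\<bar> < 1"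
  unfolding abs_less_iff using floor_correct[of a] floor_correct[of b] assms by linarith
lemma ceil_close: assumes "\<lceil>a\<rceil> = \<lceil>b::real\<rceil>" shows "\<bar>a - b\<bar> < 1"
  unfolding abs_less_iff using ceiling_correct[of a] ceiling_correct[of b] assms by linarith

lemma nat_floor_le: assumes "a \<le> real n" shows "nat \<lfloor>a\<rfloor> \<le> n"
  using assms by (simp add: nat_le_iff le_floor_iff floor_le_iff)
lemma nat_ceil_le: assumes "a \<le> real n" shows "nat \<lceil>a\<rceil> \<le> n"
  using assms by (simp add: nat_le_iff ceiling_le_iff)

lemma linf_ge: "\<bar>x $ i\<bar> \<le> linf_norm x"
  unfolding linf_norm_def by (rule Max_ge) auto

lemma linf_lt: assumes "\<And>i. \<bar>x $ i\<bar> < 1" shows "linf_norm x < 1"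
proof -
  have "linf_norm x \<in> range (\<lambda>i. \<bar>x $ i\<bar>)"
    unfolding linf_norm_def by (rule Max_in) auto
  then show ?thesis using assms by auto
qed

definition gridP :: "nat ^ 'm \<Rightarrow> ('m \<Rightarrow> nat) set" where
  "gridP u = PiE UNIV (\<lambda>i. {0..u $ i})"

definition emb :: "('m \<Rightarrow> nat) \<Rightarrow> real ^ 'm" where
  "emb p = (\<chi> i. real (p i))"

lemma card_gridP: "card (gridP u) = (\<Prod>i\<in>UNIV. u $ i + 1)"
  unfolding gridP_def by (simp add: card_PiE)

lemma finite_gridP: "finite (gridP u)"
  unfolding gridP_def by (intro finite_PiE) auto

lemma G_eq: "nn_box u \<inter> {x. \<forall>i. x $ i \<in> \<int>} = emb ` gridP u"
proof
  show "nn_box u \<inter> {x. \<forall>i. x $ i \<in> \<int>} \<subseteq> emb ` gridP u"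
  proof
    fix x assume x: "x \<in> nn_box u \<inter> {x. \<forall>i. x $ i \<in> \<int>}"
    define p where "p = (\<lambda>i. nat \<lfloor>x $ i\<rfloor>)"
    have "x $ i = real (p i)" for i
    proof -
      from x obtain k where k: "x $ i = of_int k" by (auto elim: Ints_cases)
      have "0 \<le> x $ i" using x unfolding nn_box_def by auto
      with k have "k \<ge> 0" by simp
      then show ?thesis using k unfolding p_def by simp
    qed
    hence "x = emb p" unfolding emb_def by (simp add: vec_eq_iff)
    moreover have "p \<in> gridP u"
      unfolding gridP_def p_def using x unfolding nn_box_def
      by (auto simp: PiE_def Pi_def intro: nat_floor_le)
    ultimately show "x \<in> emb ` gridP u" by blast
  qed
  show "emb ` gridP u \<subseteq> nn_box u \<inter> {x. \<forall>i. x $ i \<in> \<int>}"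
    unfolding gridP_def emb_def nn_box_def by (auto simp: PiE_def Pi_def)
qed

lemma inj_emb: "inj emb"
  unfolding emb_def inj_def by (auto simp: vec_eq_iff fun_eq_iff)

lemma card_G: "card (nn_box u \<inter> {x. \<forall>i. x $ i \<in> \<int>}) = (\<Prod>i\<in>UNIV. u $ i + 1)"
  unfolding G_eq card_gridP[symmetric]
  by (rule card_image[OF inj_on_subset[OF inj_emb subset_UNIV]])

lemma finite_G: "finite (nn_box u \<inter> {x. \<forall>i. x $ i \<in> \<int>})"
  unfolding G_eq by (intro finite_imageI finite_gridP)

lemma fc_int: assumes "\<lfloor>a::real\<rfloor> = \<lceil>a\<rceil>" shows "a \<in> \<int>"
proof -
  have "a = of_int \<lfloor>a\<rfloor>" using of_int_floor_le[of a] le_of_int_ceiling[of a] assms by linarith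
  then show ?thesis by (metis Ints_of_int)
qed
lemma nat_fc: "0 \<le> (a::real) \<Longrightarrow> nat \<lfloor>a\<rfloor> = nat \<lceil>a\<rceil> \<Longrightarrow> \<lfloor>a\<rfloor> = \<lceil>a\<rceil>"
  by (simp add: eq_nat_nat_iff)
lemma sum0: fixes f :: "'a \<Rightarrow> int" assumes "finite A" "\<And>x. x \<in> A \<Longrightarrow> 0 \<le> f x" "sum f A = 0" "x \<in> A"
  shows "f x = 0"
  using sum_nonneg_eq_0_iff[OF assms(1)] assms(2-4) by blast

lemma key:
  assumes D: "D \<subseteq> nn_box u" "finite D" "card D = (\<Prod>i\<in>UNIV. u $ i + 1)"
    and pw: "\<And>x y. x \<in> D \<Longrightarrow> y \<in> D \<Longrightarrow> x \<noteq> y \<Longrightarrow> linf_norm (x - y) \<ge> 1"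
  shows "D = nn_box u \<inter> {x. \<forall>i. x $ i \<in> \<int>}"
proof -
  define F where "F = (\<lambda>x::real^'a. \<lambda>i. nat \<lfloor>x $ i\<rfloor>)"
  define Cl where "Cl = (\<lambda>x::real^'a. \<lambda>i. nat \<lceil>x $ i\<rceil>)"
  have nn: "x \<in> D \<Longrightarrow> 0 \<le> x $ i \<and> x $ i \<le> real (u $ i)" for x i
    using D(1) unfolding nn_box_def by auto
  have injF: "inj_on F D"
  proof
    fix x y assume xy: "x \<in> D" "y \<in> D" "F x = F y"
    have "\<bar>(x - y) $ i\<bar> < 1" for i
    proof -
      have "nat \<lfloor>x $ i\<rfloor> = nat \<lfloor>y $ i\<rfloor>" using fun_cong[OF xy(3), of i] unfolding F_def by simp
      hence "\<lfloor>x $ i\<rfloor> = \<lfloor>y $ i\<rfloor>" using nn[OF xy(1), of i] nn[OF xy(2), of i] by (simp add: eq_nat_nat_iff)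
      then show ?thesis using floor_close by simp
    qed
    hence "linf_norm (x - y) < 1" by (rule linf_lt)
    then show "x = y" using pw[OF xy(1,2)] by (metis not_less)
  qed
  have injC: "inj_on Cl D"
  proof
    fix x y assume xy: "x \<in> D" "y \<in> D" "Cl x = Cl y"
    have "\<bar>(x - y) $ i\<bar> < 1" for i
    proof -
      have "nat \<lceil>x $ i\<rceil> = nat \<lceil>y $ i\<rceil>" using fun_cong[OF xy(3), of i] unfolding Cl_def by simp
      hence "\<lceil>x $ i\<rceil> = \<lceil>y $ i\<rceil>" using nn[OF xy(1), of i] nn[OF xy(2), of i] by (simp add: eq_nat_nat_iff)
      then show ?thesis using ceil_close by simp
    qed
    hence "linf_norm (x - y) < 1" by (rule linf_lt)
    then show "x = y" using pw[OF xy(1,2)] by (metis not_less)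
  qed
  have Fsub: "F ` D \<subseteq> gridP u"
    unfolding gridP_def F_def using nn
    by (auto simp: PiE_def Pi_def intro: nat_floor_le)
  have Csub: "Cl ` D \<subseteq> gridP u"
    unfolding gridP_def Cl_def using nn
    by (auto simp: PiE_def Pi_def intro: nat_ceil_le)
  have FD: "F ` D = gridP u"
    using Fsub injF D(3) by (intro card_subset_eq finite_gridP) (auto simp: card_image card_gridP)
  have CD: "Cl ` D = gridP u"
    using Csub injC D(3) by (intro card_subset_eq finite_gridP) (auto simp: card_image card_gridP)
  define s where "s = (\<lambda>p::'a\<Rightarrow>nat. (\<Sum>i\<in>UNIV. int (p i)))"
  have r1: "sum s (gridP u) = (\<Sum>x\<in>D. s (F x))"
    using sum.reindex[OF injF, of s] unfolding FD comp_def .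
  have r2: "sum s (gridP u) = (\<Sum>x\<in>D. s (Cl x))"
    using sum.reindex[OF injC, of s] unfolding CD comp_def .
  have diff: "(\<Sum>x\<in>D. s (Cl x) - s (F x)) = 0"
    unfolding sum_subtractf using r1 r2 by linarith
  have le: "F x i \<le> Cl x i" for x i
    unfolding F_def Cl_def by (intro nat_mono floor_le_ceiling)
  have nnd: "s (Cl x) - s (F x) = (\<Sum>i\<in>UNIV. int (Cl x i) - int (F x i))" for x
    by (simp only: s_def sum_subtractf)
  have nn2: "0 \<le> s (Cl x) - s (F x)" for x
    unfolding nnd by (rule sum_nonneg) (use le in simp)
  have z: "s (Cl x) - s (F x) = 0" if "x \<in> D" for x
    by (rule sum0[OF D(2) _ diff that]) (rule nn2)
  have eq: "F x i = Cl x i" if x: "x \<in> D" for x i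
  proof -
    have S: "(\<Sum>i\<in>UNIV. int (Cl x i) - int (F x i)) = 0" using z[OF x] unfolding nnd .
    have "int (Cl x i) - int (F x i) = 0"
    proof (rule sum0[where A=UNIV and f="\<lambda>j. int (Cl x j) - int (F x j)"])
      show "finite (UNIV :: 'a set)" by simp
      show "0 \<le> int (Cl x j) - int (F x j)" for j using le[of x j] by simp
    qed (use S in auto)
    thus ?thesis by simp
  qed
  have "D \<subseteq> nn_box u \<inter> {x. \<forall>i. x $ i \<in> \<int>}"
  proof
    fix x assume x: "x \<in> D"
    have "x $ i \<in> \<int>" for i
    proof (rule fc_int, rule nat_fc)
      show "0 \<le> x $ i" using nn[OF x, of i] by simp
      show "nat \<lfloor>x $ i\<rfloor> = nat \<lceil>x $ i\<rceil>" using eq[OF x, of i] unfolding F_def Cl_def .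
    qed
    thus "x \<in> nn_box u \<inter> {x. \<forall>i. x $ i \<in> \<int>}" using x D(1) by blast
  qed
  moreover have "card D = card (nn_box u \<inter> {x. \<forall>i. x $ i \<in> \<int>})"
    unfolding card_G D(3) ..
  ultimately show ?thesis by (rule card_subset_eq[OF finite_G])
qed

lemma delta_le:
  assumes "finite D" "x \<in> D" "y \<in> D" "x \<noteq> y"
  shows "delta D \<le> linf_norm (x - y)"
proof -
  have "finite {linf_norm (x - y) | x y. x \<in> D \<and> y \<in> D \<and> x \<noteq> y}"
  proof (rule finite_subset)
    show "{linf_norm (x - y) | x y. x \<in> D \<and> y \<in> D \<and> x \<noteq> y} \<subseteq> (\<lambda>(x,y). linf_norm (x-y)) ` (D\<times>D)" by force
    show "finite ((\<lambda>(x,y). linf_norm (x-y)) ` (D\<times>D))" using assms(1) by blast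
  qed
  then show ?thesis unfolding delta_def by (rule Min_le) (use assms in blast)
qed

lemma G_delta:
  assumes "card (nn_box u \<inter> {x. \<forall>i. x $ i \<in> \<int>}) \<ge> 2"
  shows "delta (nn_box u \<inter> {x. \<forall>i. x $ i \<in> \<int>}) \<ge> 1"
proof -
  let ?G = "nn_box u \<inter> {x. \<forall>i. x $ i \<in> \<int>}"
  let ?S = "{linf_norm (x - y) | x y. x \<in> ?G \<and> y \<in> ?G \<and> x \<noteq> y}"
  have fin: "finite ?S"
  proof (rule finite_subset)
    show "?S \<subseteq> (\<lambda>(x,y). linf_norm (x-y)) ` (?G\<times>?G)" by force
    show "finite ((\<lambda>(x,y). linf_norm (x-y)) ` (?G\<times>?G))" using finite_G by blast
  qed
  obtain a b where ab: "a \<in> ?G" "b \<in> ?G" "a \<noteq> b"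
  proof -
    have "\<not> card ?G \<le> Suc 0" using assms by simp
    then show ?thesis using that card_le_Suc0_iff_eq[OF finite_G[of u]] by blast
  qed
  have ne: "?S \<noteq> {}" using ab by blast
  have "\<forall>v\<in>?S. 1 \<le> v"
  proof
    fix v assume "v \<in> ?S"
    then obtain x y where xy: "x \<in> ?G" "y \<in> ?G" "x \<noteq> y" "v = linf_norm (x - y)" by blast
    then obtain i where i: "x $ i \<noteq> y $ i" using vec_eq_iff by blast
    have "(x - y) $ i \<in> \<int>" using xy by auto
    moreover have "(x - y) $ i \<noteq> 0" using i by simp
    ultimately have "\<bar>(x - y) $ i\<bar> \<ge> 1"
      by (metis Ints_nonzero_abs_ge1)
    then show "1 \<le> v" using linf_ge[of "x - y" i] xy by linarith
  qed
  then show ?thesis unfolding delta_def using Min_ge_iff[OF fin ne] by blast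
qed

lemma pw_of_delta:
  assumes "finite D" "delta D \<ge> 1"
  shows "\<And>x y. x \<in> D \<Longrightarrow> y \<in> D \<Longrightarrow> x \<noteq> y \<Longrightarrow> linf_norm (x - y) \<ge> 1"
  using delta_le[OF assms(1)] assms(2) by force

theorem lemma4p3:
  fixes u :: "nat ^ 'm"
  shows "optimal_code (nn_box u) (\<Prod>i\<in>UNIV. u $ i + 1) (nn_box u \<inter> {x. \<forall>i. x $ i \<in> \<int>})
       \<and> (\<forall>C. optimal_code (nn_box u) (\<Prod>i\<in>UNIV. u $ i + 1) C
              \<longrightarrow> C = nn_box u \<inter> {x. \<forall>i. x $ i \<in> \<int>})"
proof -
  let ?G = "nn_box u \<inter> {x. \<forall>i. x $ i \<in> \<int>}"
  let ?N = "\<Prod>i\<in>UNIV. u $ i + 1"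
  have main: "D = ?G" if D: "D \<subseteq> nn_box u" "finite D" "card D = ?N" "delta D \<ge> delta ?G" for D
  proof (cases "?N \<ge> 2")
    case True
    then have "delta D \<ge> 1" using G_delta[of u] card_G[of u] D(4) by simp
    then show ?thesis using key[OF D(1-3)] pw_of_delta[OF D(2)] by blast
  next
    case False
    then have "card D \<le> 1" using D(3) by simp
    then have "\<And>x y. x \<in> D \<Longrightarrow> y \<in> D \<Longrightarrow> x \<noteq> y \<Longrightarrow> linf_norm (x - y) \<ge> 1"
      using D(2) by (metis card_le_Suc0_iff_eq One_nat_def)
    then show ?thesis using key[OF D(1-3)] by blast
  qed
  have opt: "optimal_code (nn_box u) ?N ?G"
    unfolding optimal_code_def
  proof (intro conjI allI impI)
    show "?G \<subseteq> nn_box u" by blast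
    show "finite ?G" by (rule finite_G)
    show "card ?G = ?N" by (rule card_G)
    fix D assume D: "D \<subseteq> nn_box u \<and> finite D \<and> card D = ?N"
    show "delta D \<le> delta ?G"
    proof (rule ccontr)
      assume "\<not> ?thesis"
      then have "delta D > delta ?G" by simp
      moreover then have "D = ?G" using main D by simp
      ultimately show False by simp
    qed
  qed
  moreover have "\<forall>C. optimal_code (nn_box u) ?N C \<longrightarrow> C = ?G"
  proof (intro allI impI)
    fix C assume "optimal_code (nn_box u) ?N C"
    then have "C \<subseteq> nn_box u" "finite C" "card C = ?N" "delta ?G \<le> delta C"
      using opt unfolding optimal_code_def by (auto simp: finite_G card_G)
    then show "C = ?G" using main by blast
  qed
  ultimately show ?thesis by blast
qed

end
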